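(* Let $V$ be a complex vector space with inner products $\langle\cdot,\cdot\rangle_1,\langle\cdot,\cdot\rangle_2$ and induced norms $\|\cdot\|_1,\|\cdot\|_2$. Suppose at least one of the following holds: (1) $\langle\cdot,\cdot\rangle_2=c\langle\cdot,\cdot\rangle_1$ for some $c>0$; (2) $\|\cdot\|_2=c\|\cdot\|_1$ for some $c>0$; (3) the two inner products give the same angle between every pair of nonzero vectors; (4) for all nonzero $x,y$, $\mathrm{Re}\langle x,y\rangle_1=0\iff\mathrm{Re}\langle x,y\rangle_2=0$; (5) for all $x,y$, $\langle x,y\rangle_1=0\iff\langle x,y\rangle_2=0$; (6) for some $\theta_0\in(0,\pi)$, for all nonzero $x,y$ the angle between $x,y$ with respect to $\langle\cdot,\cdot\rangle_1$ is $\theta_0$ iff it is $\theta_0$ with respect to $\langle\cdot,\cdot\rangle_2$. If moreover there is a nonzero $x\in V$ with $\|x\|_1=\|x\|_2$, then $\langle\cdot,\cdot\rangle_1=\langle\cdot,\cdot\rangle_2$.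
   Context: Inner products are linear in the first argument and conjugate-linear in the second, with norm $\|x\|=\sqrt{\langle x,x\rangle}$. The angle between nonzero vectors $x,y$ of a complex inner product space is the unique $\theta\in[0,\pi]$ with $\cos\theta=\mathrm{Re}\,\langle x,y\rangle/(\|x\|\|y\|)$. *)

theory Defs
  imports Complex_Main
begin

text \<open>A complex vector space is modelled as a type 'a of class ab_group_add together
with a scalar multiplication sc :: complex => 'a => 'a satisfying the locale vector_space.\<close>
definition is_cinner :: "(complex \<Rightarrow> 'a::ab_group_add \<Rightarrow> 'a) \<Rightarrow> ('a \<Rightarrow> 'a \<Rightarrow> complex) \<Rightarrow> bool" where
  "is_cinner sc ip \<longleftrightarrow>
     (\<forall>x y z. ip (x + y) z = ip x z + ip y z) \<and>
     (\<forall>c x y. ip (sc c x) y = c * ip x y) \<and>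
     (\<forall>x y. ip y x = cnj (ip x y)) \<and>
     (\<forall>x. x \<noteq> 0 \<longrightarrow> 0 < Re (ip x x))"

definition ip_norm :: "('a \<Rightarrow> 'a \<Rightarrow> complex) \<Rightarrow> 'a \<Rightarrow> real" where
  "ip_norm ip x = sqrt (Re (ip x x))"

definition ip_angle :: "('a \<Rightarrow> 'a \<Rightarrow> complex) \<Rightarrow> 'a \<Rightarrow> 'a \<Rightarrow> real" where
  "ip_angle ip x y = arccos (Re (ip x y) / (ip_norm ip x * ip_norm ip y))"

end

theory Submission
  imports Defs
begin


locale cip =
  fixes sc :: "complex \<Rightarrow> 'a::ab_group_add \<Rightarrow> 'a" and ip :: "'a \<Rightarrow> 'a \<Rightarrow> complex"
  assumes cinner: "is_cinner sc ip"
begin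

lemma addL: "ip (x + y) z = ip x z + ip y z"
  using cinner unfolding is_cinner_def by blast
lemma scL: "ip (sc c x) y = c * ip x y"
  using cinner unfolding is_cinner_def by blast
lemma symm: "ip y x = cnj (ip x y)"
  using cinner unfolding is_cinner_def by blast
lemma pos: "x \<noteq> 0 \<Longrightarrow> 0 < Re (ip x x)"
  using cinner unfolding is_cinner_def by blast

lemma addR: "ip x (y + z) = ip x y + ip x z"
  by (metis addL complex_cnj_add symm)
lemma scR: "ip x (sc c y) = cnj c * ip x y"
  by (metis scL complex_cnj_mult complex_cnj_cnj symm)
lemma zeroL[simp]: "ip 0 y = 0"
  using addL[of 0 0 y] by simp
lemma zeroR[simp]: "ip y 0 = 0"
  using addR[of y 0 0] by simp
lemma minusL: "ip (- x) y = - ip x y"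
  using addL[of x "-x" y] by (simp add: eq_neg_iff_add_eq_0 add.commute)
lemma minusR: "ip y (- x) = - ip y x"
  using addR[of y x "-x"] by (simp add: eq_neg_iff_add_eq_0 add.commute)
lemma diffR: "ip x (y - z) = ip x y - ip x z"
  using addR[of x y "-z"] minusR by simp
lemma Im_self: "Im (ip x x) = 0"
  using symm[of x x] by (metis complex_cnj_cancel_iff complex_cnj_zero_iff Im_complex_of_real Reals_cnj_iff complex_is_Real_iff)
lemma self_real: "ip x x = complex_of_real (Re (ip x x))"
  using Im_self by (simp add: complex_eq_iff)
lemma q_nonneg: "0 \<le> Re (ip x x)"
  using pos[of x] by (cases "x = 0") auto
lemma q_zero: "Re (ip x x) = 0 \<longleftrightarrow> x = 0"
  using pos[of x] by (cases "x = 0") auto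

lemma q_sc: "Re (ip (sc c v) (sc c v)) = (cmod c)^2 * Re (ip v v)"
proof -
  have "ip (sc c v) (sc c v) = (c * cnj c) * ip v v" by (simp add: scL scR)
  also have "c * cnj c = complex_of_real ((cmod c)^2)" using complex_norm_square[of c] by simp
  finally show ?thesis using self_real[of v]
    by (metis Re_complex_of_real of_real_mult)
qed

lemma r_sym: "Re (ip y x) = Re (ip x y)"
  using symm[of y x] by simp

lemma expand1: "Re (ip x (sc (complex_of_real g) x + sc (complex_of_real d) z)) = g * Re (ip x x) + d * Re (ip x z)"
  by (simp add: addR scR)

lemma expand2: "Re (ip (sc (complex_of_real a) x + sc (complex_of_real b) z) (sc (complex_of_real a) x + sc (complex_of_real b) z))
   = a^2 * Re (ip x x) + 2*a*b * Re (ip x z) + b^2 * Re (ip z z)"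
  using r_sym[of x z] by (simp add: addR addL scR scL power2_eq_square algebra_simps)

lemma CS: "\<bar>Re (ip x y)\<bar> \<le> ip_norm ip x * ip_norm ip y"
proof (cases "y = 0")
  case True then show ?thesis by (simp add: ip_norm_def)
next
  case False
  define qx where "qx = Re (ip x x)"
  define qy where "qy = Re (ip y y)"
  define r where "r = Re (ip x y)"
  have qy: "qy > 0" using pos False qy_def by blast
  define t where "t = r / qy"
  have "0 \<le> Re (ip (sc (complex_of_real 1) x + sc (complex_of_real (-t)) y) (sc (complex_of_real 1) x + sc (complex_of_real (-t)) y))"
    by (rule q_nonneg)
  also have "\<dots> = qx - 2*t*r + t^2 * qy" unfolding expand2 qx_def qy_def r_def by simp
  also have "\<dots> = qx - r^2/qy" using qy unfolding t_def by (simp add: field_simps power2_eq_square)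
  finally have "r^2 \<le> qx * qy" using qy by (simp add: field_simps)
  then have "sqrt (r^2) \<le> sqrt (qx * qy)" by (rule real_sqrt_le_mono)
  then show ?thesis unfolding ip_norm_def qx_def qy_def r_def by (simp add: real_sqrt_mult)
qed

lemma norm_pos: "x \<noteq> 0 \<Longrightarrow> ip_norm ip x > 0"
  unfolding ip_norm_def using pos by simp

lemma ratio_bound: "x \<noteq> 0 \<Longrightarrow> y \<noteq> 0 \<Longrightarrow> \<bar>Re (ip x y) / (ip_norm ip x * ip_norm ip y)\<bar> \<le> 1"
  using CS[of x y] norm_pos[of x] norm_pos[of y] by (simp add: abs_divide abs_mult divide_le_eq_1)

lemma sc_real2: "ip (sc (complex_of_real a) x) (sc (complex_of_real b) z) = complex_of_real (a*b) * ip x z"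
  by (simp add: scL scR)

lemma expand_pm: "ip (u + v) (u - v) = ip u u - ip v v + (cnj (ip u v) - ip u v)"
  by (simp add: addL diffR symm[of v u])

end

lemma aux_cancel: "(a::real) > 0 \<Longrightarrow> b > 0 \<Longrightarrow> a = a / b * c \<Longrightarrow> b = c"
  by (simp add: field_simps)

lemma polar:
  assumes A: "cip sc ip1" and B: "cip sc ip2" and q: "\<And>v. Re (ip1 v v) = Re (ip2 v v)"
  shows "ip1 = ip2"
proof (intro ext)
  fix x y
  interpret I1: cip sc ip1 by (rule A)
  interpret I2: cip sc ip2 by (rule B)
  have re: "Re (ip1 x y) = Re (ip2 x y)" for x y
  proof -
    have "Re (ip1 (x+y) (x+y)) = Re (ip1 x x) + Re (ip1 y y) + 2 * Re (ip1 x y)"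
      using I1.r_sym[of x y] by (simp add: I1.addL I1.addR)
    moreover have "Re (ip2 (x+y) (x+y)) = Re (ip2 x x) + Re (ip2 y y) + 2 * Re (ip2 x y)"
      using I2.r_sym[of x y] by (simp add: I2.addL I2.addR)
    ultimately show ?thesis using q[of "x+y"] q[of x] q[of y] by simp
  qed
  have "Re (ip1 x (sc \<i> y)) = Re (ip2 x (sc \<i> y))" by (rule re)
  moreover have "ip1 x (sc \<i> y) = - \<i> * ip1 x y" using I1.scR[of x \<i> y] by simp
  moreover have "ip2 x (sc \<i> y) = - \<i> * ip2 x y" using I2.scR[of x \<i> y] by simp
  ultimately have "Im (ip1 x y) = Im (ip2 x y)" by simp
  with re[of x y] show "ip1 x y = ip2 x y" by (simp add: complex_eq_iff)
qed

lemma core: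
  assumes A: "cip sc ip1" and B: "cip sc ip2" and u0: "u0 \<noteq> 0"
    and eq0: "Re (ip1 u0 u0) = Re (ip2 u0 u0)"
    and H: "\<And>u v. Re (ip1 u u) = Re (ip1 v v) \<Longrightarrow> Im (ip1 u v) = 0 \<Longrightarrow> Re (ip2 u u) = Re (ip2 v v)"
  shows "Re (ip1 v v) = Re (ip2 v v)"
proof (cases "v = 0")
  case True
  interpret I1: cip sc ip1 by (rule A)
  interpret I2: cip sc ip2 by (rule B)
  show ?thesis using True by simp
next
  case False
  interpret I1: cip sc ip1 by (rule A)
  interpret I2: cip sc ip2 by (rule B)
  define w where "w = ip1 u0 v"
  define mu where "mu = (if w = 0 then 1 else w / complex_of_real (cmod w))"
  have mu1: "cmod mu = 1" unfolding mu_def by (simp add: norm_divide)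
  have mu2: "Im (cnj mu * w) = 0"
  proof (cases "w = 0")
    case True then show ?thesis by simp
  next
    case False
    have "cnj mu * w = complex_of_real (1 / cmod w) * (cnj w * w)"
      unfolding mu_def using False by simp
    then show ?thesis by simp
  qed
  have p1: "Re (ip1 u0 u0) > 0" using I1.pos u0 by blast
  have pv: "Re (ip1 v v) > 0" using I1.pos False by blast
  define t where "t = sqrt (Re (ip1 u0 u0) / Re (ip1 v v))"
  have t2: "t^2 = Re (ip1 u0 u0) / Re (ip1 v v)" unfolding t_def using p1 pv by simp
  define lm where "lm = complex_of_real t * mu"
  have lam: "(cmod lm)^2 = t^2" unfolding lm_def using mu1 by (simp add: norm_mult power_mult_distrib)
  have "Re (ip1 u0 u0) = Re (ip1 (sc lm v) (sc lm v))"
    using I1.q_sc lam t2 pv by simp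
  moreover have "Im (ip1 u0 (sc lm v)) = 0"
  proof -
    have "ip1 u0 (sc lm v) = complex_of_real t * (cnj mu * w)"
      unfolding lm_def w_def by (simp add: I1.scR)
    then show ?thesis using mu2 by simp
  qed
  ultimately have "Re (ip2 u0 u0) = Re (ip2 (sc lm v) (sc lm v))" by (rule H)
  then have "Re (ip2 u0 u0) = t^2 * Re (ip2 v v)" using I2.q_sc lam by simp
  then have "Re (ip1 u0 u0) = Re (ip1 u0 u0) / Re (ip1 v v) * Re (ip2 v v)" using t2 eq0 by simp
  then show ?thesis using p1 pv aux_cancel by blast
qed

lemma orth_H:
  assumes A: "cip sc ip1" and B: "cip sc ip2"
    and O: "\<And>x z. Re (ip1 x z) = 0 \<Longrightarrow> Re (ip2 x z) = 0"
    and "Re (ip1 u u) = Re (ip1 v v)"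
  shows "Re (ip2 u u) = Re (ip2 v v)"
proof -
  interpret I1: cip sc ip1 by (rule A)
  interpret I2: cip sc ip2 by (rule B)
  have "Re (ip1 (u+v) (u-v)) = 0" using assms(4) by (simp add: I1.expand_pm)
  then have "Re (ip2 (u+v) (u-v)) = 0" by (rule O)
  then show ?thesis by (simp add: I2.expand_pm)
qed

lemma five_H:
  assumes A: "cip sc ip1" and B: "cip sc ip2"
    and O: "\<And>x z. ip1 x z = 0 \<longleftrightarrow> ip2 x z = 0"
    and "Re (ip1 u u) = Re (ip1 v v)" and "Im (ip1 u v) = 0"
  shows "Re (ip2 u u) = Re (ip2 v v)"
proof -
  interpret I1: cip sc ip1 by (rule A)
  interpret I2: cip sc ip2 by (rule B)
  have "cnj (ip1 u v) - ip1 u v = 0" using assms(5) by (simp add: complex_eq_iff)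
  then have "ip1 (u+v) (u-v) = 0" using assms(4) I1.self_real[of u] I1.self_real[of v]
    by (simp add: I1.expand_pm)
  then have "ip2 (u+v) (u-v) = 0" using O by blast
  then have "Re (ip2 (u+v) (u-v)) = 0" by simp
  then show ?thesis by (simp add: I2.expand_pm)
qed

lemma alg:
  fixes k s a b m A P M :: real
  assumes s: "s > 0" and ks: "k^2 + s^2 = 1" and A: "A > 0" "A^2 = a"
    and P: "P^2 = k^2*a + 2*k*s*m + s^2*b" and M: "M^2 = k^2*a - 2*k*s*m + s^2*b"
    and e1: "k*a + s*m = k*A*P" and e2: "k*a - s*m = k*A*M"
  shows "m = 0"
proof (cases "k = 0")
  case True then show ?thesis using e1 s by simp
next
  case False
  have "(k*a + s*m)^2 = k^2*A^2*P^2" using e1 by (simp add: power_mult_distrib)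
  then have f1: "(k*a + s*m)^2 = k^2*a*(k^2*a + 2*k*s*m + s^2*b)" using A P by simp
  have "(k*a - s*m)^2 = k^2*A^2*M^2" using e2 by (simp add: power_mult_distrib)
  then have f2: "(k*a - s*m)^2 = k^2*a*(k^2*a - 2*k*s*m + s^2*b)" using A M by simp
  have "(k*a + s*m)^2 - (k*a - s*m)^2 = 4*k*a*s*m" by (simp add: power2_eq_square algebra_simps)
  moreover have "(k*a + s*m)^2 - (k*a - s*m)^2 = k^2*a*(4*k*s*m)" using f1 f2 by (simp add: algebra_simps)
  ultimately have "4*k*a*s*m * (1 - k^2) = 0" by (simp add: power2_eq_square algebra_simps)
  moreover have e: "1 - k^2 = s^2" using ks by linarith
  ultimately have "4*k*a*s*m * s^2 = 0" by metis
  moreover have "a > 0" using A by auto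
  ultimately show ?thesis using False s by simp
qed

lemma six_unit:
  assumes A: "cip sc ip1" and B: "cip sc ip2"
    and th: "0 < th" "th < pi"
    and hyp: "\<And>x y. x \<noteq> 0 \<Longrightarrow> y \<noteq> 0 \<Longrightarrow> (ip_angle ip1 x y = th \<longleftrightarrow> ip_angle ip2 x y = th)"
    and x: "Re (ip1 x x) = 1" and z: "Re (ip1 z z) = 1" and xz: "Re (ip1 x z) = 0"
  shows "Re (ip2 x z) = 0"
proof -
  interpret I1: cip sc ip1 by (rule A)
  interpret I2: cip sc ip2 by (rule B)
  define k where "k = cos th"
  define s where "s = sin th"
  have s: "s > 0" unfolding s_def using th sin_gt_zero by blast
  have ks: "k^2 + s^2 = 1" unfolding k_def s_def by (simp add: sin_cos_squared_add2)
  define a where "a = Re (ip2 x x)"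
  define b where "b = Re (ip2 z z)"
  define m where "m = Re (ip2 x z)"
  have x0: "x \<noteq> 0" using x by auto
  have step: "Re (ip2 x (sc (complex_of_real k) x + sc (complex_of_real d) z))
      = k * ip_norm ip2 x * ip_norm ip2 (sc (complex_of_real k) x + sc (complex_of_real d) z)"
    if d: "k^2 + d^2 = 1" for d
  proof -
    define y where "y = sc (complex_of_real k) x + sc (complex_of_real d) z"
    have qy: "Re (ip1 y y) = 1" unfolding y_def I1.expand2 using x z xz d by simp
    have y0: "y \<noteq> 0" using qy by auto
    have rxy: "Re (ip1 x y) = k" unfolding y_def I1.expand1 using x xz by simp
    have "ip_angle ip1 x y = arccos (cos th)"
      unfolding ip_angle_def ip_norm_def using qy x rxy k_def by simp
    also have "\<dots> = th" using th by (simp add: arccos_cos)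
    finally have "ip_angle ip2 x y = th" using hyp x0 y0 by blast
    then have "arccos (Re (ip2 x y) / (ip_norm ip2 x * ip_norm ip2 y)) = th" unfolding ip_angle_def .
    then have "cos (arccos (Re (ip2 x y) / (ip_norm ip2 x * ip_norm ip2 y))) = k" unfolding k_def by simp
    moreover have "\<bar>Re (ip2 x y) / (ip_norm ip2 x * ip_norm ip2 y)\<bar> \<le> 1" using I2.ratio_bound x0 y0 by blast
    ultimately have "Re (ip2 x y) / (ip_norm ip2 x * ip_norm ip2 y) = k" by (simp add: cos_arccos_abs)
    moreover have "ip_norm ip2 x > 0" "ip_norm ip2 y > 0" using I2.norm_pos x0 y0 by auto
    ultimately show ?thesis unfolding y_def[symmetric] by (auto simp: divide_eq_eq mult.assoc)
  qed
  have sp: "k^2 + s^2 = 1" and sm: "k^2 + (-s)^2 = 1" using ks by auto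
  have nsq: "(ip_norm ip2 v)^2 = Re (ip2 v v)" for v unfolding ip_norm_def using I2.q_nonneg by simp
  have "m = 0"
  proof (rule alg[where k=k and s=s and a=a and b=b and A="ip_norm ip2 x" and P="ip_norm ip2 (sc (complex_of_real k) x + sc (complex_of_real s) z)" and M="ip_norm ip2 (sc (complex_of_real k) x + sc (complex_of_real (-s)) z)"])
    show "0 < s" by (rule s)
    show "k^2 + s^2 = 1" by (rule ks)
    show "0 < ip_norm ip2 x" using I2.norm_pos x0 by blast
    show "(ip_norm ip2 x)^2 = a" unfolding a_def by (rule nsq)
    show "(ip_norm ip2 (sc (complex_of_real k) x + sc (complex_of_real s) z))^2 = k^2*a + 2*k*s*m + s^2*b"
      unfolding nsq I2.expand2 a_def b_def m_def by simp
    show "(ip_norm ip2 (sc (complex_of_real k) x + sc (complex_of_real (-s)) z))^2 = k^2*a - 2*k*s*m + s^2*b"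
      unfolding nsq I2.expand2 a_def b_def m_def by simp
    show "k*a + s*m = k * ip_norm ip2 x * ip_norm ip2 (sc (complex_of_real k) x + sc (complex_of_real s) z)"
      using step[OF sp] unfolding I2.expand1 a_def m_def by simp
    show "k*a - s*m = k * ip_norm ip2 x * ip_norm ip2 (sc (complex_of_real k) x + sc (complex_of_real (-s)) z)"
      using step[OF sm] unfolding I2.expand1 a_def m_def by simp
  qed
  then show ?thesis unfolding m_def .
qed

lemma six_orth:
  assumes A: "cip sc ip1" and B: "cip sc ip2"
    and th: "0 < th" "th < pi"
    and hyp: "\<And>x y. x \<noteq> 0 \<Longrightarrow> y \<noteq> 0 \<Longrightarrow> (ip_angle ip1 x y = th \<longleftrightarrow> ip_angle ip2 x y = th)"
    and xz: "Re (ip1 x z) = 0"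
  shows "Re (ip2 x z) = 0"
proof (cases "x = 0 \<or> z = 0")
  case True
  interpret I2: cip sc ip2 by (rule B)
  show ?thesis using True by auto
next
  case False
  interpret I1: cip sc ip1 by (rule A)
  interpret I2: cip sc ip2 by (rule B)
  define \<alpha> where "\<alpha> = 1 / ip_norm ip1 x"
  define \<beta> where "\<beta> = 1 / ip_norm ip1 z"
  have na: "ip_norm ip1 x > 0" "ip_norm ip1 z > 0" using I1.norm_pos False by auto
  have nsq: "(ip_norm ip1 v)^2 = Re (ip1 v v)" for v unfolding ip_norm_def using I1.q_nonneg by simp
  have u1: "Re (ip1 (sc (complex_of_real \<alpha>) x) (sc (complex_of_real \<alpha>) x)) = 1"
  proof -
    have "\<alpha>^2 * (ip_norm ip1 x)^2 = 1" unfolding \<alpha>_def using na by (simp add: power_divide)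
    then show ?thesis unfolding I1.q_sc norm_of_real power2_abs nsq .
  qed
  have u2: "Re (ip1 (sc (complex_of_real \<beta>) z) (sc (complex_of_real \<beta>) z)) = 1"
  proof -
    have "\<beta>^2 * (ip_norm ip1 z)^2 = 1" unfolding \<beta>_def using na by (simp add: power_divide)
    then show ?thesis unfolding I1.q_sc norm_of_real power2_abs nsq .
  qed
  have u3: "Re (ip1 (sc (complex_of_real \<alpha>) x) (sc (complex_of_real \<beta>) z)) = 0"
    unfolding I1.sc_real2 using xz by simp
  have "Re (ip2 (sc (complex_of_real \<alpha>) x) (sc (complex_of_real \<beta>) z)) = 0"
    by (rule six_unit[OF A B th hyp u1 u2 u3])
  then have "\<alpha> * \<beta> * Re (ip2 x z) = 0" unfolding I2.sc_real2 by simp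
  moreover have "\<alpha> * \<beta> \<noteq> 0" unfolding \<alpha>_def \<beta>_def using na by simp
  ultimately show ?thesis by simp
qed


theorem mainTheorem11:
  fixes sc :: "complex \<Rightarrow> 'a::ab_group_add \<Rightarrow> 'a"
    and ip1 ip2 :: "'a \<Rightarrow> 'a \<Rightarrow> complex"
  assumes vs: "vector_space sc"
  assumes ip1: "is_cinner sc ip1" and ip2: "is_cinner sc ip2"
  assumes conds:
    "(\<exists>c::real. c > 0 \<and> (\<forall>x y. ip2 x y = complex_of_real c * ip1 x y))
     \<or> (\<exists>c::real. c > 0 \<and> (\<forall>x. ip_norm ip2 x = c * ip_norm ip1 x))
     \<or> (\<forall>x y. x \<noteq> 0 \<longrightarrow> y \<noteq> 0 \<longrightarrow> ip_angle ip1 x y = ip_angle ip2 x y)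
     \<or> (\<forall>x y. x \<noteq> 0 \<longrightarrow> y \<noteq> 0 \<longrightarrow> (Re (ip1 x y) = 0 \<longleftrightarrow> Re (ip2 x y) = 0))
     \<or> (\<forall>x y. ip1 x y = 0 \<longleftrightarrow> ip2 x y = 0)
     \<or> (\<exists>\<theta>0. 0 < \<theta>0 \<and> \<theta>0 < pi \<and>
          (\<forall>x y. x \<noteq> 0 \<longrightarrow> y \<noteq> 0 \<longrightarrow>
             (ip_angle ip1 x y = \<theta>0 \<longleftrightarrow> ip_angle ip2 x y = \<theta>0)))"
  assumes eqnorm: "\<exists>x. x \<noteq> 0 \<and> ip_norm ip1 x = ip_norm ip2 x"
  shows "ip1 = ip2"
  proof -
  have A: "cip sc ip1" using ip1 by (simp add: cip_def)
  have B: "cip sc ip2" using ip2 by (simp add: cip_def)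
  interpret I1: cip sc ip1 by (rule A)
  interpret I2: cip sc ip2 by (rule B)
  obtain u0 where u0: "u0 \<noteq> 0" and nu: "ip_norm ip1 u0 = ip_norm ip2 u0" using eqnorm by blast
  have eq0: "Re (ip1 u0 u0) = Re (ip2 u0 u0)"
    using nu I1.q_nonneg[of u0] I2.q_nonneg[of u0] unfolding ip_norm_def by simp
  have p0: "Re (ip1 u0 u0) > 0" using I1.pos u0 by blast
  have fromO: "Re (ip1 v v) = Re (ip2 v v)"
    if O: "\<And>x z. Re (ip1 x z) = 0 \<Longrightarrow> Re (ip2 x z) = 0" for v
    by (rule core[OF A B u0 eq0 orth_H[OF A B O]])
  have fromSix: "Re (ip1 v v) = Re (ip2 v v)"
    if th: "0 < th" "th < pi"
    and hyp: "\<And>x y. x \<noteq> 0 \<Longrightarrow> y \<noteq> 0 \<Longrightarrow> (ip_angle ip1 x y = th \<longleftrightarrow> ip_angle ip2 x y = th)" for th v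
    by (rule fromO) (rule six_orth[OF A B th hyp])
  have "\<forall>v. Re (ip1 v v) = Re (ip2 v v)"
    using conds
  proof (elim disjE exE conjE; intro allI)
    fix c :: real and v
    assume c: "0 < c" and h: "\<forall>x y. ip2 x y = complex_of_real c * ip1 x y"
    have "Re (ip2 u0 u0) = c * Re (ip1 u0 u0)" using h by simp
    then have "c = 1" using eq0 p0 by simp
    then show "Re (ip1 v v) = Re (ip2 v v)" using h by simp
  next
    fix c :: real and v
    assume c: "0 < c" and h: "\<forall>x. ip_norm ip2 x = c * ip_norm ip1 x"
    have "ip_norm ip1 u0 > 0" using I1.norm_pos u0 by blast
    then have "c = 1" using h nu by (metis mult_cancel_right1 less_irrefl)
    then have "ip_norm ip1 v = ip_norm ip2 v" using h by simp
    then show "Re (ip1 v v) = Re (ip2 v v)"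
      using I1.q_nonneg[of v] I2.q_nonneg[of v] unfolding ip_norm_def by simp
  next
    fix v
    assume h: "\<forall>x y. x \<noteq> 0 \<longrightarrow> y \<noteq> 0 \<longrightarrow> ip_angle ip1 x y = ip_angle ip2 x y"
    show "Re (ip1 v v) = Re (ip2 v v)"
      by (rule fromSix[of "pi/2"]) (use h in auto)
  next
    fix v
    assume h: "\<forall>x y. x \<noteq> 0 \<longrightarrow> y \<noteq> 0 \<longrightarrow> (Re (ip1 x y) = 0) = (Re (ip2 x y) = 0)"
    show "Re (ip1 v v) = Re (ip2 v v)"
    proof (rule fromO)
      fix x z assume "Re (ip1 x z) = 0"
      then show "Re (ip2 x z) = 0" using h by (cases "x = 0 \<or> z = 0") auto
    qed
  next
    fix v
    assume h: "\<forall>x y. (ip1 x y = 0) = (ip2 x y = 0)"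
    show "Re (ip1 v v) = Re (ip2 v v)"
      by (rule core[OF A B u0 eq0]) (rule five_H[OF A B], use h in auto)
  next
    fix th v
    assume "0 < th" "th < pi" and h: "\<forall>x y. x \<noteq> 0 \<longrightarrow> y \<noteq> 0 \<longrightarrow> (ip_angle ip1 x y = th) = (ip_angle ip2 x y = th)"
    show "Re (ip1 v v) = Re (ip2 v v)"
      by (rule fromSix[of th]) (use h \<open>0 < th\<close> \<open>th < pi\<close> in auto)
  qed
  then show ?thesis by (intro polar[OF A B]) blast
qed

end
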